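(* For every integer $l\geq 0$, with $m=2^l$ and $n=4m+1$, the oriented graph $T_l$ is $n$-nice.
   Context: For $l\ge0$, let $m=2^l$, $n=4m+1$. The oriented graph $T_l$ has vertex set $\{x_i : i\in\mathbb{Z}/n\mathbb{Z}\}$ (the vertex $x_i$ being identified with the $m$-tuple $(i,i+1,\dots,i+m-1)$ of elements of $\mathbb{Z}/n\mathbb{Z}$), and arcs $x_ix_{i+m}$ and $x_ix_{i+m+1}$ for every $i$ (indices mod $n$). For a vertex $x$ let $N^+(x)$ (resp. $N^-(x)$) be its set of out-neighbors (resp. in-neighbors), and for a set $S$ let $N^{\pm}(S)=\bigcup_{x\in S}N^{\pm}(x)$. For $\alpha=(\alpha_1,\dots,\alpha_k)\in\{+,-\}^k$ define $N^\alpha(x)=N^{\alpha_1}(x)$ if $k=1$ and $N^{\alpha}(x)=N^{\alpha_1}(N^{(\alpha_2,\dots,\alpha_k)}(x))$ if $k\ge2$. An oriented graph $G$ is $k$-nice if $N^\alpha(x)=V(G)$ for every $\alpha\in\{+,-\}^k$ and every $x\in V(G)$. *)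

theory Defs
  imports Main
begin

datatype sign = Plus | Minus

definition out_nbrs :: "'a set \<Rightarrow> ('a \<Rightarrow> 'a \<Rightarrow> bool) \<Rightarrow> 'a \<Rightarrow> 'a set" where
  "out_nbrs V A x = {y \<in> V. A x y}"

definition in_nbrs :: "'a set \<Rightarrow> ('a \<Rightarrow> 'a \<Rightarrow> bool) \<Rightarrow> 'a \<Rightarrow> 'a set" where
  "in_nbrs V A x = {y \<in> V. A y x}"

definition nbr :: "'a set \<Rightarrow> ('a \<Rightarrow> 'a \<Rightarrow> bool) \<Rightarrow> sign \<Rightarrow> 'a \<Rightarrow> 'a set" where
  "nbr V A s x = (case s of Plus \<Rightarrow> out_nbrs V A x | Minus \<Rightarrow> in_nbrs V A x)"

definition nbr_set :: "'a set \<Rightarrow> ('a \<Rightarrow> 'a \<Rightarrow> bool) \<Rightarrow> sign \<Rightarrow> 'a set \<Rightarrow> 'a set" where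
  "nbr_set V A s S = (\<Union>x\<in>S. nbr V A s x)"

text \<open>N^(a1,...,ak)(S) = N^a1(N^(a2,...,ak)(S)); N^alpha(x) = nbr_seq V A alpha {x} for alpha nonempty.\<close>
fun nbr_seq :: "'a set \<Rightarrow> ('a \<Rightarrow> 'a \<Rightarrow> bool) \<Rightarrow> sign list \<Rightarrow> 'a set \<Rightarrow> 'a set" where
  "nbr_seq V A [] S = S"
| "nbr_seq V A (s # ss) S = nbr_set V A s (nbr_seq V A ss S)"

definition nice :: "'a set \<Rightarrow> ('a \<Rightarrow> 'a \<Rightarrow> bool) \<Rightarrow> nat \<Rightarrow> bool" where
  "nice V A k \<longleftrightarrow> (\<forall>alpha. length alpha = k \<longrightarrow> (\<forall>x\<in>V. nbr_seq V A alpha {x} = V))"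

text \<open>T_l: vertices x_i, i in Z/nZ represented by {0..<n}; arcs x_i x_(i+m), x_i x_(i+m+1) mod n.\<close>
definition T_verts :: "nat \<Rightarrow> nat set" where
  "T_verts l = {0..<4 * 2^l + 1}"

definition T_arc :: "nat \<Rightarrow> nat \<Rightarrow> nat \<Rightarrow> bool" where
  "T_arc l i j \<longleftrightarrow> (let m = 2^l; n = 4 * m + 1 in
     i < n \<and> j < n \<and> (j = (i + m) mod n \<or> j = (i + m + 1) mod n))"

end

theory Submission
  imports Defs
begin

definition RR :: "nat \<Rightarrow> int \<Rightarrow> int \<Rightarrow> int \<Rightarrow> nat set" where
  "RR n z a b = {y. y < n \<and> (\<exists>c. a \<le> c \<and> c \<le> b \<and> int y mod int n = (z + c) mod int n)}"

lemma arc_iff: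
  assumes "N = 4*2^l+1" "M = (2::nat)^l"
  shows "T_arc l i j \<longleftrightarrow> i < N \<and> j < N \<and>
     (int j = (int i + int M) mod int N \<or> int j = (int i + int M + 1) mod int N)"
proof -
  have e1: "int ((i + M) mod N) = (int i + int M) mod int N"
    by (simp add: zmod_int)
  have e2: "int ((i + M + 1) mod N) = (int i + int M + 1) mod int N"
    by (simp add: zmod_int ac_simps)
  have "T_arc l i j \<longleftrightarrow> i < N \<and> j < N \<and> (j = (i + M) mod N \<or> j = (i + M + 1) mod N)"
    unfolding T_arc_def Let_def assms ..
  also have "\<dots> \<longleftrightarrow> i < N \<and> j < N \<and>
     (int j = (int i + int M) mod int N \<or> int j = (int i + int M + 1) mod int N)"
    unfolding e1[symmetric] e2[symmetric] of_nat_eq_iff ..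
  finally show ?thesis .
qed

lemma nat_eq_modI:
  assumes "y < n" "int y mod int n = w mod int n" "n > 0"
  shows "int y = w mod int n"
  using assms by (metis mod_less of_nat_less_iff zmod_int)

lemma plus_step:
  fixes l :: nat
  defines "n \<equiv> 4*2^l+1" and "m \<equiv> int (2^l)"
  assumes ab: "a \<le> b"
  shows "nbr_set (T_verts l) (T_arc l) Plus (RR n z a b) = RR n z (a+m) (b+m+1)"
proof
  show "nbr_set (T_verts l) (T_arc l) Plus (RR n z a b) \<subseteq> RR n z (a+m) (b+m+1)"
  proof
    fix y' assume "y' \<in> nbr_set (T_verts l) (T_arc l) Plus (RR n z a b)"
    then obtain y c where y: "y < n" "a \<le> c" "c \<le> b" "int y mod int n = (z + c) mod int n"
      and arc: "T_arc l y y'" and y'n: "y' < n"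
      unfolding nbr_set_def nbr_def out_nbrs_def RR_def T_verts_def n_def by auto
    from arc have "int y' = (int y + m) mod int n \<or> int y' = (int y + m + 1) mod int n"
      unfolding arc_iff[OF meta_eq_to_obj_eq[OF n_def] refl] m_def by blast
    then show "y' \<in> RR n z (a+m) (b+m+1)"
    proof
      assume h: "int y' = (int y + m) mod int n"
      have "int y' mod int n = (z + (c+m)) mod int n"
        using h y(4) by (metis add.assoc mod_add_left_eq mod_mod_trivial)
      then show ?thesis unfolding RR_def using y y'n by (intro CollectI conjI exI[of _ "c+m"]) auto
    next
      assume h: "int y' = (int y + m + 1) mod int n"
      have "int y' mod int n = (z + (c+m+1)) mod int n"
        using h y(4) by (metis add.assoc mod_add_left_eq mod_mod_trivial)
      then show ?thesis unfolding RR_def using y y'n by (intro CollectI conjI exI[of _ "c+m+1"]) auto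
    qed
  qed
  show "RR n z (a+m) (b+m+1) \<subseteq> nbr_set (T_verts l) (T_arc l) Plus (RR n z a b)"
  proof
    fix y' assume "y' \<in> RR n z (a+m) (b+m+1)"
    then obtain c' where y': "y' < n" "a+m \<le> c'" "c' \<le> b+m+1" "int y' mod int n = (z + c') mod int n"
      unfolding RR_def by auto
    have npos: "n > 0" unfolding n_def by simp
    obtain c d where cd: "a \<le> c" "c \<le> b" "d = m \<or> d = m+1" "c' = c + d"
    proof (cases "c' \<le> b + m")
      case True
      show ?thesis using that[of "c' - m" m] True y' by simp
    next
      case False
      show ?thesis using that[of b "m+1"] False y' ab by simp
    qed
    define y where "y = nat ((z + c) mod int n)"
    have yi: "int y = (z+c) mod int n" unfolding y_def using npos by simp
    have yn: "y < n" using yi npos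
      by (metis Euclidean_Rings.pos_mod_bound of_nat_0_less_iff of_nat_less_iff)
    have yR: "y \<in> RR n z a b" unfolding RR_def using yn cd yi by auto
    have "int y' = (int y + d) mod int n"
      using nat_eq_modI[OF y'(1) _ npos, of "int y + d"] y'(4) cd(4) yi
      by (metis add.assoc mod_add_left_eq)
    then have "T_arc l y y'" unfolding arc_iff[OF meta_eq_to_obj_eq[OF n_def] refl] using yn y'(1) cd(3)
      unfolding m_def by (auto simp: ac_simps)
    then show "y' \<in> nbr_set (T_verts l) (T_arc l) Plus (RR n z a b)"
      unfolding nbr_set_def nbr_def out_nbrs_def T_verts_def using yR y'(1) unfolding n_def
      by auto
  qed
qed

lemma minus_step:
  fixes l :: nat
  defines "n \<equiv> 4*2^l+1" and "m \<equiv> int (2^l)"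
  assumes ab: "a \<le> b"
  shows "nbr_set (T_verts l) (T_arc l) Minus (RR n z a b) = RR n z (a-m-1) (b-m)"
proof
  have npos: "n > 0" unfolding n_def by simp
  show "nbr_set (T_verts l) (T_arc l) Minus (RR n z a b) \<subseteq> RR n z (a-m-1) (b-m)"
  proof
    fix y' assume "y' \<in> nbr_set (T_verts l) (T_arc l) Minus (RR n z a b)"
    then obtain y c where y: "y < n" "a \<le> c" "c \<le> b" "int y mod int n = (z + c) mod int n"
      and arc: "T_arc l y' y" and y'n: "y' < n"
      unfolding nbr_set_def nbr_def in_nbrs_def RR_def T_verts_def n_def by auto
    from arc have "int y = (int y' + m) mod int n \<or> int y = (int y' + m + 1) mod int n"
      unfolding arc_iff[OF meta_eq_to_obj_eq[OF n_def] refl] m_def by blast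
    then obtain d where d: "d = m \<or> d = m+1" "int y = (int y' + d) mod int n"
      by (metis add.assoc)
    have "int y' mod int n = (int y - d) mod int n"
      using d(2) by (simp add: mod_diff_left_eq)
    also have "\<dots> = (int y mod int n - d) mod int n"
      by (simp add: mod_diff_left_eq)
    also have "\<dots> = ((z + c) mod int n - d) mod int n"
      using y(4) by simp
    also have "\<dots> = (z + c - d) mod int n"
      by (simp add: mod_diff_left_eq)
    finally have "int y' mod int n = (z + (c - d)) mod int n" by (simp add: algebra_simps)
    then show "y' \<in> RR n z (a-m-1) (b-m)" unfolding RR_def using y y'n d(1)
      by (intro CollectI conjI exI[of _ "c-d"]) auto
  qed
  show "RR n z (a-m-1) (b-m) \<subseteq> nbr_set (T_verts l) (T_arc l) Minus (RR n z a b)"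
  proof
    fix y' assume "y' \<in> RR n z (a-m-1) (b-m)"
    then obtain c' where y': "y' < n" "a-m-1 \<le> c'" "c' \<le> b-m" "int y' mod int n = (z + c') mod int n"
      unfolding RR_def by auto
    obtain c d where cd: "a \<le> c" "c \<le> b" "d = m \<or> d = m+1" "c = c' + d"
    proof (cases "a - m \<le> c'")
      case True
      show ?thesis using that[of "c' + m" m] True y' by simp
    next
      case False
      show ?thesis using that[of "c'+m+1" "m+1"] False y' ab by simp
    qed
    define y where "y = nat ((z + c) mod int n)"
    have yi: "int y = (z+c) mod int n" unfolding y_def using npos by simp
    have yn: "y < n" using yi npos
      by (metis Euclidean_Rings.pos_mod_bound of_nat_0_less_iff of_nat_less_iff)
    have yR: "y \<in> RR n z a b" unfolding RR_def using yn cd yi by auto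
    have "(int y' + d) mod int n = (int y' mod int n + d) mod int n"
      by (simp add: mod_add_left_eq)
    also have "\<dots> = ((z + c') mod int n + d) mod int n" using y'(4) by simp
    also have "\<dots> = (z + c' + d) mod int n" by (simp add: mod_add_left_eq)
    also have "\<dots> = int y" using yi cd(4) by (simp add: ac_simps)
    finally have "int y = (int y' + d) mod int n" by simp
    then have "T_arc l y' y" unfolding arc_iff[OF meta_eq_to_obj_eq[OF n_def] refl] using yn y'(1) cd(3)
      unfolding m_def by (auto simp: ac_simps)
    then show "y' \<in> nbr_set (T_verts l) (T_arc l) Minus (RR n z a b)"
      unfolding nbr_set_def nbr_def in_nbrs_def T_verts_def using yR y'(1) unfolding n_def
      by auto
  qed
qed

lemma seq_RR:
  fixes l :: nat
  defines "n \<equiv> 4*2^l+1"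
  assumes x: "x < n"
  shows "\<exists>a b. a \<le> b \<and> b - a \<ge> int (length alpha) \<and>
           nbr_seq (T_verts l) (T_arc l) alpha {x} = RR n (int x) a b"
proof (induction alpha)
  case Nil
  have "{x} = RR n (int x) 0 0"
  proof
    show "{x} \<subseteq> RR n (int x) 0 0" unfolding RR_def using x by auto
    show "RR n (int x) 0 0 \<subseteq> {x}" unfolding RR_def using x
      by (auto simp: zmod_int[symmetric])
  qed
  then show ?case by (intro exI[of _ 0]) auto
next
  case (Cons s ss)
  then obtain a b where ab: "a \<le> b" "b - a \<ge> int (length ss)"
    "nbr_seq (T_verts l) (T_arc l) ss {x} = RR n (int x) a b" by blast
  show ?case
  proof (cases s)
    case Plus
    show ?thesis using plus_step[of a b l "int x"] ab Plus unfolding n_def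
      by (intro exI[of _ "a + int (2^l)"] exI[of _ "b + int (2^l) + 1"]) auto
  next
    case Minus
    show ?thesis using minus_step[of a b l "int x"] ab Minus unfolding n_def
      by (intro exI[of _ "a - int (2^l) - 1"] exI[of _ "b - int (2^l)"]) auto
  qed
qed

lemma RR_full:
  assumes "n > 0" "b - a \<ge> int n - 1"
  shows "RR n z a b = {0..<n}"
proof
  show "RR n z a b \<subseteq> {0..<n}" unfolding RR_def by auto
  show "{0..<n} \<subseteq> RR n z a b"
  proof
    fix y assume y: "y \<in> {0..<n}"
    define c where "c = a + (int y - z - a) mod int n"
    have "0 \<le> (int y - z - a) mod int n" "(int y - z - a) mod int n < int n"
      using assms(1) by auto
    then have c1: "a \<le> c" "c \<le> b" unfolding c_def using assms(2) by auto
    have "(z + c) mod int n = (z + a + (int y - z - a) mod int n) mod int n"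
      unfolding c_def by (simp add: add.assoc)
    also have "\<dots> = (z + a + (int y - z - a)) mod int n"
      by (rule mod_add_right_eq)
    also have "\<dots> = int y mod int n" by simp
    finally show "y \<in> RR n z a b" unfolding RR_def using y c1 by auto
  qed
qed

theorem lemma11:
  fixes l :: nat
  shows "nice (T_verts l) (T_arc l) (4 * 2^l + 1)"
  unfolding nice_def
proof (intro allI impI ballI)
  fix alpha :: "sign list" and x
  assume len: "length alpha = 4 * 2^l + 1" and x: "x \<in> T_verts l"
  then obtain a b where ab: "a \<le> b" "b - a \<ge> int (length alpha)"
    "nbr_seq (T_verts l) (T_arc l) alpha {x} = RR (4*2^l+1) (int x) a b"
    using seq_RR[of x l alpha] unfolding T_verts_def by auto
  have "RR (4*2^l+1) (int x) a b = {0..<4*2^l+1}"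
    by (rule RR_full) (use ab len in auto)
  then show "nbr_seq (T_verts l) (T_arc l) alpha {x} = T_verts l"
    using ab unfolding T_verts_def by simp
qed

end
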